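(* Let $n,m\ge2$, $s>0$. The function $f:\Omega_{L_n,m}\to\mathbb R$, \[f(\xi)=\sum_{k=1}^{n-1}\sin\Big(\frac{\pi k}{n}\Big)\Big(\sum_{i=1}^k\xi(i)-\frac{mk}{n}\Big),\] is an eigenfunction of the generator $\mathcal L^{\mathrm{BB}(L_n,s,m)}$ with eigenvalue $\lambda=\frac{1}{n-1}\big(\cos(\pi/n)-1\big)$, i.e. $\mathcal L^{\mathrm{BB}(L_n,s,m)}f=\lambda f$.
   Context: $L_n$ is the line graph on $\{1,\dots,n\}$ with edges $\{k,k+1\}$, all weights 1. $\Omega_{L_n,m}=\{\xi\in\mathbb N_0^{\{1,\dots,n\}}:\sum_i\xi(i)=m\}$. $\mathcal L^{\mathrm{BB}(L_n,s,m)}g=\sum_{k=1}^{n-1}\frac{1}{n-1}(\mathcal P_{\{k,k+1\}}g-g)$, where $\mathcal P_{\{k,k+1\}}g(\xi)=\mathbb E[g(\xi')]$ with $\xi'(k)=X$, $\xi'(k+1)=\xi(k)+\xi(k+1)-X$, $\xi'(j)=\xi(j)$ otherwise, and $X\sim\mathrm{BetaBin}(\xi(k)+\xi(k+1),s,s)$. *)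

theory Defs
  imports "HOL-Analysis.Analysis"
begin

definition Omega :: "nat \<Rightarrow> nat \<Rightarrow> (nat \<Rightarrow> nat) set" where
  "Omega n m = {\<xi>. (\<forall>i. i \<notin> {1..n} \<longrightarrow> \<xi> i = 0) \<and> (\<Sum>i=1..n. \<xi> i) = m}"

definition betabin_pmf :: "nat \<Rightarrow> real \<Rightarrow> real \<Rightarrow> nat \<Rightarrow> real" where
  "betabin_pmf N a b j = real (N choose j) * Beta (real j + a) (real (N - j) + b) / Beta a b"

definition P_edge :: "real \<Rightarrow> nat \<Rightarrow> ((nat \<Rightarrow> nat) \<Rightarrow> real) \<Rightarrow> (nat \<Rightarrow> nat) \<Rightarrow> real" where
  "P_edge s k g \<xi> =
     (let N = \<xi> k + \<xi> (k+1) in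
      \<Sum>j=0..N. betabin_pmf N s s j * g (\<xi>(k := j, k+1 := N - j)))"

definition L_BB :: "nat \<Rightarrow> real \<Rightarrow> ((nat \<Rightarrow> nat) \<Rightarrow> real) \<Rightarrow> (nat \<Rightarrow> nat) \<Rightarrow> real" where
  "L_BB n s g \<xi> = (\<Sum>k=1..n-1. (1 / real (n - 1)) * (P_edge s k g \<xi> - g \<xi>))"

end

theory Submission imports Defs begin

lemma Gamma_shift: fixes x :: real assumes "x > 0"
  shows "Gamma (x + real k) = pochhammer x k * Gamma x"
proof -
  have "x \<notin> \<int>\<^sub>\<le>\<^sub>0" using assms by (auto elim!: nonpos_Ints_cases)
  then show ?thesis using pochhammer_Gamma[of x k] Gamma_real_pos[OF assms] by simp
qed

lemma poch_vandermonde: fixes a b :: real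
  shows "(\<Sum>k=0..N. real (N choose k) * pochhammer a k * pochhammer b (N - k)) = pochhammer (a+b) N"
proof -
  define F where "F = (fact N :: real)"
  have F0: "F \<noteq> 0" unfolding F_def by simp
  have V: "(\<Sum>k=0..N. ((-a) gchoose k) * ((-b) gchoose (N - k))) = (-a + -b) gchoose N"
    by (rule gbinomial_Vandermonde)
  have g: "(-x) gchoose k = (-1)^k * pochhammer x k / fact k" for x :: real and k
    by (simp add: gbinomial_pochhammer)
  have e: "((-a) gchoose k) * ((-b) gchoose (N - k)) = ((-1)^N / F) * (real (N choose k) * pochhammer a k * pochhammer b (N - k))"
    if "k \<le> N" for k
  proof -
    have fN: "F = real (N choose k) * (fact k * fact (N-k))"
      unfolding F_def using arg_cong[OF binomial_fact_lemma[OF that], of "of_nat :: nat \<Rightarrow> real"] by (simp add: ac_simps)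
    have sg: "(-1::real)^k * (-1)^(N-k) = (-1)^N" using that by (simp flip: power_add)
    have nz: "fact k * fact (N-k) \<noteq> (0::real)" by simp
    have inv: "1 / (fact k * fact (N-k)) = real (N choose k) / F"
      using fN nz F0 by (simp add: divide_simps)
    have "((-a) gchoose k) * ((-b) gchoose (N - k)) = ((-1::real)^k * (-1)^(N-k)) * (pochhammer a k * pochhammer b (N-k)) * (1 / (fact k * fact (N-k)))"
      unfolding g by (simp add: ac_simps)
    also have "\<dots> = ((-1)^N / F) * (real (N choose k) * pochhammer a k * pochhammer b (N - k))"
      unfolding sg inv by (simp add: ac_simps)
    finally show ?thesis .
  qed
  have "(\<Sum>k=0..N. ((-a) gchoose k) * ((-b) gchoose (N - k))) = (\<Sum>k=0..N. ((-1)^N / F) * (real (N choose k) * pochhammer a k * pochhammer b (N - k)))"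
    by (rule sum.cong) (simp_all add: e)
  also have "\<dots> = ((-1)^N / F) * (\<Sum>k=0..N. real (N choose k) * pochhammer a k * pochhammer b (N - k))"
    by (rule sum_distrib_left[symmetric])
  finally have 1: "(\<Sum>k=0..N. ((-a) gchoose k) * ((-b) gchoose (N - k))) = ((-1)^N / F) * (\<Sum>k=0..N. real (N choose k) * pochhammer a k * pochhammer b (N - k))" .
  have 2: "(-a + -b) gchoose N = ((-1)^N / F) * pochhammer (a+b) N"
    using g[of "a+b" N] unfolding F_def by simp
  have "((-1)^N / F) * (\<Sum>k=0..N. real (N choose k) * pochhammer a k * pochhammer b (N - k)) = ((-1)^N / F) * pochhammer (a+b) N"
    using V 1 2 by simp
  then show ?thesis using F0 by simp
qed

lemma betabin_alt: assumes "s > 0" "j \<le> N"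
  shows "betabin_pmf N s s j = real (N choose j) * pochhammer s j * pochhammer s (N - j) / pochhammer (2 * s) N"
proof -
  have g: "Gamma s > 0" "Gamma (2 * s) > 0" using assms by auto
  have p: "pochhammer (2 * s) N > 0" using assms by (simp add: pochhammer_pos)
  have "Gamma (real j + s + (real (N - j) + s)) = pochhammer (2 * s) N * Gamma (2 * s)"
    using Gamma_shift[of "2 * s" N] assms by (simp add: algebra_simps of_nat_diff)
  moreover have "Gamma (real j + s) = pochhammer s j * Gamma s" using Gamma_shift[of s j] assms by (simp add: add.commute)
  moreover have "Gamma (real (N - j) + s) = pochhammer s (N-j) * Gamma s" using Gamma_shift[of s "N-j"] assms by (simp add: add.commute)
  moreover have "s + s = 2 * s" by simp
  ultimately have "betabin_pmf N s s j = real (N choose j) * (pochhammer s j * Gamma s * (pochhammer s (N-j) * Gamma s) / (pochhammer (2 * s) N * Gamma (2 * s))) / (Gamma s * Gamma s / Gamma (2 * s))"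
    unfolding betabin_pmf_def Beta_def by simp
  also have "\<dots> = real (N choose j) * pochhammer s j * pochhammer s (N - j) / pochhammer (2 * s) N"
    using g p by (simp add: divide_simps)
  finally show ?thesis .
qed

lemma betabin_sum: assumes "s > 0" shows "(\<Sum>j=0..N. betabin_pmf N s s j) = 1"
proof -
  have p: "pochhammer (2 * s) N > 0" using assms by (simp add: pochhammer_pos)
  have "(\<Sum>j=0..N. betabin_pmf N s s j) = (\<Sum>j=0..N. real (N choose j) * pochhammer s j * pochhammer s (N - j)) / pochhammer (2 * s) N"
    unfolding sum_divide_distrib by (rule sum.cong) (simp_all add: betabin_alt assms)
  also have "\<dots> = 1"
  proof -
    have v: "(\<Sum>j=0..N. real (N choose j) * pochhammer s j * pochhammer s (N - j)) = pochhammer (2 * s) N"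
      using poch_vandermonde[of N s s] by (metis mult_2)
    show ?thesis unfolding v using p by simp
  qed
  finally show ?thesis .
qed

lemma betabin_symm: assumes "j \<le> N" shows "betabin_pmf N s s (N - j) = betabin_pmf N s s j"
proof -
  have c: "N choose (N-j) = N choose j" by (rule binomial_symmetric[OF assms, symmetric])
  have d: "N - (N - j) = j" using assms by simp
  show ?thesis unfolding betabin_pmf_def c d by (simp add: Beta_commute[of "real (N-j) + s"])
qed

lemma betabin_mean: assumes "s > 0" shows "(\<Sum>j=0..N. betabin_pmf N s s j * real j) = real N / 2"
proof -
  have "(\<Sum>j=0..N. betabin_pmf N s s j * real j) = (\<Sum>j=0..N. betabin_pmf N s s (N - j) * real (N - j))"
    by (rule sum.reindex_bij_witness[of _ "\<lambda>j. N - j" "\<lambda>j. N - j"]) auto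
  also have "\<dots> = (\<Sum>j=0..N. betabin_pmf N s s j * (real N - real j))"
    by (rule sum.cong) (auto simp: betabin_symm of_nat_diff)
  also have "\<dots> = real N * (\<Sum>j=0..N. betabin_pmf N s s j) - (\<Sum>j=0..N. betabin_pmf N s s j * real j)"
    by (simp add: algebra_simps sum_subtractf sum_distrib_left)
  finally show ?thesis using betabin_sum[OF assms] by simp
qed


lemma sum_upd: assumes "finite A"
  shows "(\<Sum>i\<in>A. real ((g(a:=v)) i)) = (\<Sum>i\<in>A. real (g i)) + (if a\<in>A then real v - real (g a) else 0)"
proof (cases "a \<in> A")
  case True
  have "(\<Sum>i\<in>A. real ((g(a:=v)) i)) = real ((g(a:=v)) a) + (\<Sum>i\<in>A-{a}. real ((g(a:=v)) i))"
    by (rule sum.remove[OF assms True])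
  also have "real ((g(a:=v)) a) = real v" by simp
  also have "(\<Sum>i\<in>A-{a}. real ((g(a:=v)) i)) = (\<Sum>i\<in>A-{a}. real (g i))"
    by (rule sum.cong) auto
  moreover have "(\<Sum>i\<in>A. real (g i)) = real (g a) + (\<Sum>i\<in>A-{a}. real (g i))"
    by (rule sum.remove[OF assms True])
  ultimately show ?thesis using True by simp
next
  case False
  have "(\<Sum>i\<in>A. real ((g(a:=v)) i)) = (\<Sum>i\<in>A. real (g i))"
    by (rule sum.cong) (use False in auto)
  then show ?thesis using False by simp
qed

lemma telescope: fixes a b :: "nat \<Rightarrow> real"
  shows "(\<Sum>k=1..q. a k * b (Suc k) - a (k-1) * b k) = a q * b (Suc q) - a 0 * b 1"
  by (induction q) auto

theorem mainTheorem11: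
  fixes n m :: nat and s :: real
  assumes "n \<ge> 2" and "m \<ge> 2" and "s > 0"
  defines "f \<equiv> (\<lambda>\<xi>::nat \<Rightarrow> nat. \<Sum>k=1..n-1. sin (pi * real k / real n) *
                 ((\<Sum>i=1..k. real (\<xi> i)) - real m * real k / real n))"
  shows "\<forall>\<xi>\<in>Omega n m. L_BB n s f \<xi> = (1 / real (n - 1)) * (cos (pi / real n) - 1) * f \<xi>"
proof
  fix \<xi> assume om: "\<xi> \<in> Omega n m"
  define sn where "sn k = sin (pi * real k / real n)" for k
  define H where "H \<xi>' k = (\<Sum>i=1..k. real (\<xi>' i)) - real m * real k / real n" for \<xi>' :: "nat \<Rightarrow> nat" and k
  have fH: "f \<xi>' = (\<Sum>k=1..n-1. sn k * H \<xi>' k)" for \<xi>'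
    unfolding f_def sn_def H_def by simp
  have npos: "real n > 0" using assms by simp
  have stepA: "f (\<xi>(k := j, k+1 := \<xi> k + \<xi> (k+1) - j)) = f \<xi> + sn k * (real j - real (\<xi> k))"
    if k: "k \<in> {1..n-1}" and j: "j \<le> \<xi> k + \<xi> (k+1)" for k j
  proof -
    let ?N = "\<xi> k + \<xi> (k+1)"
    have Hk: "H (\<xi>(k := j, k+1 := ?N - j)) k' = H \<xi> k' + (if k' = k then real j - real (\<xi> k) else 0)" for k'
    proof -
      have "(\<Sum>i=1..k'. real ((\<xi>(k := j, k+1 := ?N - j)) i)) =
          (\<Sum>i=1..k'. real (\<xi> i)) + (if k \<in> {1..k'} then real j - real (\<xi> k) else 0)
           + (if k+1 \<in> {1..k'} then real (?N - j) - real (\<xi> (k+1)) else 0)"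
        using sum_upd[of "{1..k'}" "\<xi>(k:=j)" "k+1" "?N - j"] sum_upd[of "{1..k'}" \<xi> k j] by simp
      also have "\<dots> = (\<Sum>i=1..k'. real (\<xi> i)) + (if k' = k then real j - real (\<xi> k) else 0)"
        using k j by (auto simp: of_nat_diff)
      finally show ?thesis unfolding H_def by simp
    qed
    have "f (\<xi>(k := j, k+1 := ?N - j)) = (\<Sum>k'=1..n-1. sn k' * H \<xi> k' + (if k' = k then sn k' * (real j - real (\<xi> k)) else 0))"
      unfolding fH Hk by (intro sum.cong) (auto simp: algebra_simps)
    also have "\<dots> = f \<xi> + sn k * (real j - real (\<xi> k))"
      using k by (simp add: sum.distrib fH)
    finally show ?thesis .
  qed
  have stepB: "P_edge s k f \<xi> = f \<xi> + sn k * (real (\<xi> (k+1)) - real (\<xi> k)) / 2"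
    if k: "k \<in> {1..n-1}" for k
  proof -
    let ?N = "\<xi> k + \<xi> (k+1)"
    let ?p = "betabin_pmf ?N s s"
    have "P_edge s k f \<xi> = (\<Sum>j=0..?N. ?p j * (f \<xi> + sn k * (real j - real (\<xi> k))))"
      unfolding P_edge_def Let_def by (intro sum.cong refl) (subst stepA[OF k], auto)
    also have "\<dots> = (\<Sum>j=0..?N. f \<xi> * ?p j + sn k * (?p j * real j) - sn k * real (\<xi> k) * ?p j)"
      by (rule sum.cong) (simp_all add: algebra_simps)
    also have "\<dots> = f \<xi> * (\<Sum>j=0..?N. ?p j) + sn k * (\<Sum>j=0..?N. ?p j * real j) - sn k * real (\<xi> k) * (\<Sum>j=0..?N. ?p j)"
      by (simp only: sum.distrib sum_subtractf sum_distrib_left)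
    also have "\<dots> = f \<xi> + sn k * (real (\<xi> k + \<xi> (k+1)) / 2) - sn k * real (\<xi> k)"
      by (simp only: betabin_sum[OF assms(3)] betabin_mean[OF assms(3)] mult_1_right)
    also have "\<dots> = f \<xi> + sn k * (real (\<xi> (k+1)) - real (\<xi> k)) / 2"
      by (simp add: field_simps)
    finally show ?thesis .
  qed
  have L1: "L_BB n s f \<xi> = (1 / real (n-1)) * (\<Sum>k=1..n-1. sn k * (real (\<xi> (k+1)) - real (\<xi> k)) / 2)"
    unfolding L_BB_def by (simp add: stepB sum_distrib_left)
  define c where "c = cos (pi / real n)"
  have Hd: "H \<xi> (Suc k) - H \<xi> k = real (\<xi> (Suc k)) - real m / real n" for k
    unfolding H_def using npos by (simp add: field_simps)
  have H0: "H \<xi> 0 = 0" unfolding H_def by simp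
  have Hn: "H \<xi> n = 0" using om npos unfolding H_def Omega_def by (simp flip: of_nat_sum)
  have s0: "sn 0 = 0" and sn_n: "sn n = 0" unfolding sn_def using npos by auto
  have trig: "sn (k-1) + sn (k+1) = 2 * c * sn k" if "k \<ge> 1" for k
  proof -
    have "sn (k-1) = sin (pi * real k / real n - pi / real n)" "sn (k+1) = sin (pi * real k / real n + pi / real n)"
      unfolding sn_def using that npos by (simp_all add: of_nat_diff field_simps)
    then show ?thesis unfolding sin_diff sin_add c_def sn_def by simp
  qed
  have n1: "Suc (n-1) = n" using assms by simp
  have T1: "(\<Sum>k=1..n-1. sn k * H \<xi> (Suc k) - sn (k-1) * H \<xi> k) = 0"
    using telescope[of sn "H \<xi>" "n-1"] n1 Hn s0 by simp
  have T2: "(\<Sum>k=1..n-1. H \<xi> k * sn (Suc k) - H \<xi> (k-1) * sn k) = 0"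
    using telescope[of "H \<xi>" sn "n-1"] n1 sn_n H0 by simp
  have pt: "sn k * (real (\<xi> (k+1)) - real (\<xi> k)) / 2 =
      (sn k * H \<xi> (Suc k) - sn (k-1) * H \<xi> k) / 2 - (H \<xi> k * sn (Suc k) - H \<xi> (k-1) * sn k) / 2
      + (c - 1) * (sn k * H \<xi> k)" if "k \<in> {1..n-1}" for k
  proof -
    have k: "k = Suc (k-1)" using that by simp
    have e1: "real (\<xi> (k+1)) - real (\<xi> k) = H \<xi> (Suc k) - 2 * H \<xi> k + H \<xi> (k-1)"
    proof -
      have "H \<xi> k - H \<xi> (k-1) = real (\<xi> k) - real m / real n" using Hd[of "k-1"] k by simp
      then show ?thesis using Hd[of k] by simp
    qed
    have "sn (k-1) + sn (Suc k) = 2 * c * sn k" using trig[of k] that by simp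
    then have e2: "(sn (k-1) + sn (Suc k)) / 2 = c * sn k" by simp
    have e3: "(c - 1) * (sn k * H \<xi> k) = (sn (k-1) + sn (Suc k)) / 2 * H \<xi> k - sn k * H \<xi> k"
      by (simp only: e2) (simp add: algebra_simps)
    show ?thesis by (subst e3, subst e1) (simp add: field_simps)
  qed
  have "(\<Sum>k=1..n-1. sn k * (real (\<xi> (k+1)) - real (\<xi> k)) / 2) =
     (\<Sum>k=1..n-1. (sn k * H \<xi> (Suc k) - sn (k-1) * H \<xi> k) / 2 - (H \<xi> k * sn (Suc k) - H \<xi> (k-1) * sn k) / 2
      + (c - 1) * (sn k * H \<xi> k))"
    by (intro sum.cong refl pt) assumption
  also have "\<dots> =
     (\<Sum>k=1..n-1. (sn k * H \<xi> (Suc k) - sn (k-1) * H \<xi> k)) / 2 - (\<Sum>k=1..n-1. H \<xi> k * sn (Suc k) - H \<xi> (k-1) * sn k) / 2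
      + (c - 1) * (\<Sum>k=1..n-1. sn k * H \<xi> k)"
    by (simp add: sum.distrib sum_subtractf sum_divide_distrib sum_distrib_left diff_divide_distrib)
  also have "\<dots> = (c - 1) * f \<xi>" using T1 T2 fH by simp
  finally show "L_BB n s f \<xi> = (1 / real (n - 1)) * (cos (pi / real n) - 1) * f \<xi>"
    using L1 c_def by simp
qed

end
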